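(* Let $0<a<b$ and let $\mu$ be the positive measure on $[0,+\infty[$ defined by $\int f\,d\mu=\frac1{2\pi}\int_a^b f(t)\sqrt{(t-a)(b-t)}\,\frac{dt}t$. Then $$\frac1{2\pi}\int_a^b\sqrt{(t-a)(b-t)}\frac{dt}t=\frac14(\sqrt b-\sqrt a)^2,\qquad \lim_{x\to+\infty}\Big(U^\mu(x)+\frac14(\sqrt b-\sqrt a)^2\log x\Big)=0,$$ and for all $x\ge b$, $$U^\mu(x)=-\frac12\big(x-\sqrt{ab}\log x\big)+C_\mu+\frac12\int_b^x\sqrt{(t-a)(t-b)}\frac{dt}t,$$ where $C_\mu=\frac14(a+b)\Big(1-\log\frac{b-a}4\Big)-\frac{\sqrt{ab}}2\log\frac{\sqrt b+\sqrt a}{\sqrt b-\sqrt a}$.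
   Context: $U^\mu(x)=\int\log\frac1{|x-t|}\,\mu(dt)$ denotes the logarithmic potential of $\mu$. *)

theory Defs
  imports "HOL-Analysis.Analysis"
begin

definition log_potential :: "real measure \<Rightarrow> real \<Rightarrow> real" where
  "log_potential \<mu> x = (\<integral>t. ln (1 / \<bar>x - t\<bar>) \<partial>\<mu>)"

definition mp_measure :: "real \<Rightarrow> real \<Rightarrow> real measure" where
  "mp_measure a b = density lborel
     (\<lambda>t. ennreal (indicator {a..b} t * sqrt ((t - a) * (b - t)) / (2 * pi * t)))"

end

theory Submission
  imports Defs "HOL-Real_Asymp.Real_Asymp"
begin
lemma DERIV_arcsin_comp:
  assumes "(h has_real_derivative h') (at t)" "-1 < h t" "h t < 1" "sqrt (1 - (h t)^2) = s"
  shows "((\<lambda>t. arcsin (h t)) has_real_derivative h'/s) (at t)"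
  using DERIV_chain2[OF DERIV_arcsin[OF assms(2,3)] assms(1)] assms(4)
  by (simp add: field_simps)

lemma DERIV_sqrt_comp:
  assumes "(h has_real_derivative h') (at t)" "h t > 0"
  shows "((\<lambda>t. sqrt (h t)) has_real_derivative h'/(2 * sqrt (h t))) (at t)"
  using DERIV_chain2[OF DERIV_real_sqrt[OF assms(2)] assms(1)]
  by (simp add: field_simps)

lemma DERIV_ln_comp:
  assumes "(h has_real_derivative h') (at t)" "h t > 0"
  shows "((\<lambda>t. ln (h t)) has_real_derivative h'/h t) (at t)"
  using DERIV_chain2[OF DERIV_ln[OF assms(2)] assms(1)]
  by (simp add: field_simps)

lemma one_minus_sq_div:
  fixes D N M :: real
  assumes "D \<noteq> 0" "D^2 - N^2 = M^2"
  shows "1 - (N/D)^2 = (M/D)^2"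
proof -
  have "1 - (N/D)^2 = (D^2 - N^2)/D^2" using assms(1) by (simp add: power_divide field_simps)
  also have "\<dots> = (M/D)^2" by (simp add: assms(2) power_divide)
  finally show ?thesis .
qed

lemma aux_e2:
  fixes B p q s P :: real
  assumes "B \<noteq> 0" "p \<noteq> 0" "q \<noteq> 0" "s \<noteq> 0"
  shows "p * ((-2*P/(B* s^2)) / (2*p*q/(s*B))) = - P/(q* s)"
  using assms by (simp add: field_simps power2_eq_square)

lemma sqrt_sq_pos: "(y::real) \<ge> 0 \<Longrightarrow> sqrt (y^2) = y" by simp

lemma F_deriv:
  fixes a b t :: real
  assumes ab: "0 < a" "a < b" and t: "a < t" "t < b"
  shows "((\<lambda>t. sqrt ((t-a)*(b-t)) + (a+b)/2 * arcsin ((2*t-a-b)/(b-a))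
            - sqrt(a*b) * arcsin (((a+b)*t - 2*a*b)/((b-a)*t)))
          has_real_derivative sqrt((t-a)*(b-t))/t) (at t)"
proof -
  define q where "q = sqrt((t-a)*(b-t))"
  define c where "c = sqrt(a*b)"
  have R: "(t-a)*(b-t) > 0" using t by simp
  have q: "q > 0" "q^2 = (t-a)*(b-t)" using R by (auto simp: q_def)
  have c: "c > 0" "c^2 = a*b" using ab by (auto simp: c_def)
  have tp: "t > 0" using ab t by simp
  have u1: "1 - ((2*t-a-b)/(b-a))^2 = (2*q/(b-a))^2"
    using ab by (simp add: power_divide q(2) field_simps) (simp add: algebra_simps power2_eq_square)
  have v1: "1 - (((a+b)*t - 2*a*b)/((b-a)*t))^2 = (2*c*q/((b-a)*t))^2"
    using ab tp by (simp add: power_divide power_mult_distrib q(2) c(2) field_simps) (simp add: algebra_simps power2_eq_square)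
  have pos1: "(2*q/(b-a))^2 > 0" "(2*c*q/((b-a)*t))^2 > 0" using q c ab tp by auto
  have "((2*t-a-b)/(b-a))^2 < 1" "(((a+b)*t - 2*a*b)/((b-a)*t))^2 < 1"
    using u1 v1 pos1 by linarith+
  then have ub: "\<bar>(2*t-a-b)/(b-a)\<bar> < 1" "\<bar>((a+b)*t - 2*a*b)/((b-a)*t)\<bar> < 1"
    by (simp_all add: abs_square_less_1)
  have d1: "((\<lambda>t. sqrt ((t-a)*(b-t))) has_real_derivative (a+b-2*t)/(2*q)) (at t)"
  proof -
    have "((\<lambda>t. (t-a)*(b-t)) has_real_derivative (a+b-2*t)) (at t)"
      by (auto intro!: derivative_eq_intros simp: algebra_simps)
    from DERIV_sqrt_comp[OF this R] show ?thesis unfolding q_def .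
  qed
  have d2: "((\<lambda>t. arcsin ((2*t-a-b)/(b-a))) has_real_derivative (2/(b-a)) / (2*q/(b-a))) (at t)"
  proof -
    have "((\<lambda>t. 2*t-a-b) has_real_derivative 2) (at t)"
      by (auto intro!: derivative_eq_intros)
    from DERIV_cdivide[OF this, of "b-a"]
    have h: "((\<lambda>t. (2*t-a-b)/(b-a)) has_real_derivative 2/(b-a)) (at t)" .
    have s: "sqrt (1 - ((2*t-a-b)/(b-a))^2) = 2*q/(b-a)"
      unfolding u1 using q ab by simp
    show ?thesis by (rule DERIV_arcsin_comp[OF h _ _ s]) (use ub(1) in \<open>auto simp only: abs_less_iff\<close>)
  qed
  have d3: "((\<lambda>t. arcsin (((a+b)*t - 2*a*b)/((b-a)*t))) has_real_derivative
           (2*a*b/((b-a)*t^2)) / (2*c*q/((b-a)*t))) (at t)"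
  proof -
    have "((\<lambda>t. ((a+b)*t - 2*a*b)/t) has_real_derivative 2*a*b/t^2) (at t)"
      using tp by (auto intro!: derivative_eq_intros simp: field_simps power2_eq_square)
    from DERIV_cdivide[OF this, of "b-a"]
    have h: "((\<lambda>t. ((a+b)*t - 2*a*b)/((b-a)*t)) has_real_derivative 2*a*b/((b-a)*t^2)) (at t)"
      by (simp add: field_simps)
    have s: "sqrt (1 - (((a+b)*t - 2*a*b)/((b-a)*t))^2) = 2*c*q/((b-a)*t)"
      unfolding v1 using q c ab tp by simp
    show ?thesis by (rule DERIV_arcsin_comp[OF h _ _ s]) (use ub(2) in \<open>auto simp only: abs_less_iff\<close>)
  qed
  have "((\<lambda>t. sqrt ((t-a)*(b-t)) + (a+b)/2 * arcsin ((2*t-a-b)/(b-a))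
            - c * arcsin (((a+b)*t - 2*a*b)/((b-a)*t)))
          has_real_derivative (a+b-2*t)/(2*q) + (a+b)/2 * ((2/(b-a)) / (2*q/(b-a)))
             - c * ((2*a*b/((b-a)*t^2)) / (2*c*q/((b-a)*t)))) (at t)"
    by (intro DERIV_diff DERIV_add DERIV_cmult d1 d2 d3)
  moreover have "(a+b-2*t)/(2*q) + (a+b)/2 * ((2/(b-a)) / (2*q/(b-a)))
             - c * ((2*a*b/((b-a)*t^2)) / (2*c*q/((b-a)*t))) = q/t"
  proof -
    have "(a+b-2*t)/(2*q) + (a+b)/2 * ((2/(b-a)) / (2*q/(b-a)))
             - c * ((2*a*b/((b-a)*t^2)) / (2*c*q/((b-a)*t))) = ((t-a)*(b-t))/(q*t)"
    proof -
      have e1: "(2/(b-a))/(2*q/(b-a)) = 1/q" using ab q by (simp add: field_simps)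
      have e2: "c*((2*a*b/((b-a)*t^2))/(2*c*q/((b-a)*t))) = a*b/(q*t)"
        using ab q c tp by (simp add: field_simps power2_eq_square)
      have e3: "(a+b-2*t)/(2*q) + (a+b)/2*(1/q) - a*b/(q*t) = ((t-a)*(b-t))/(q*t)"
        using q tp by (simp add: field_simps)
      show ?thesis using e1 e2 e3 by simp
    qed
    also have "\<dots> = q/t" using q tp by (simp add: power2_eq_square flip: q(2))
    finally show ?thesis .
  qed
  ultimately show ?thesis unfolding c_def q_def by simp
qed

lemma G_deriv:
  fixes a b t x :: real
  assumes ab: "0 < a" "a < b" and t: "a < t" "t < b" and x: "b < x"
  shows "((\<lambda>t. - sqrt ((t-a)*(b-t)) + (x - (a+b)/2) * arcsin ((2*t-a-b)/(b-a))
            + sqrt((x-a)*(x-b)) * arcsin (((2*x-a-b)*(x-t) - 2*((x-a)*(x-b)))/((x-t)*(b-a))))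
          has_real_derivative sqrt((t-a)*(b-t))/(x-t)) (at t)"
proof -
  define q where "q = sqrt((t-a)*(b-t))"
  define P where "P = (x-a)*(x-b)"
  define p where "p = sqrt P"
  define s where "s = x - t"
  have R: "(t-a)*(b-t) > 0" using t by simp
  have q: "q > 0" "q^2 = (t-a)*(b-t)" using R by (auto simp: q_def)
  have Pp: "P > 0" using ab x by (simp add: P_def)
  have p: "p > 0" "p^2 = P" using Pp by (auto simp: p_def)
  have sp: "s > 0" using t x by (simp add: s_def)
  have u1: "1 - ((2*t-a-b)/(b-a))^2 = (2*q/(b-a))^2"
    using ab by (simp add: power_divide q(2) field_simps) (simp add: algebra_simps power2_eq_square)
  have w1: "1 - (((2*x-a-b)*(x-t) - 2*P)/((x-t)*(b-a)))^2 = (2*p*q/((x-t)*(b-a)))^2"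
  proof (rule one_minus_sq_div)
    show "(x - t) * (b - a) \<noteq> 0" using ab sp by (simp add: s_def)
    have "((x-t)*(b-a))^2 - ((2*x-a-b)*(x-t) - 2*P)^2 = 4*P*((t-a)*(b-t))"
      unfolding P_def by (simp add: power2_eq_square algebra_simps)
    then show "((x-t)*(b-a))^2 - ((2*x-a-b)*(x-t) - 2*P)^2 = (2*p*q)^2"
      by (simp add: power_mult_distrib p(2) q(2))
  qed
  have pos1: "(2*q/(b-a))^2 > 0" "(2*p*q/((x-t)*(b-a)))^2 > 0" using q p ab sp by (auto simp: s_def)
  have "((2*t-a-b)/(b-a))^2 < 1" "(((2*x-a-b)*(x-t) - 2*P)/((x-t)*(b-a)))^2 < 1"
    using u1 w1 pos1 by linarith+
  then have ub: "\<bar>(2*t-a-b)/(b-a)\<bar> < 1" "\<bar>((2*x-a-b)*(x-t) - 2*P)/((x-t)*(b-a))\<bar> < 1"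
    by (simp_all add: abs_square_less_1)
  have d1: "((\<lambda>t. sqrt ((t-a)*(b-t))) has_real_derivative (a+b-2*t)/(2*q)) (at t)"
  proof -
    have "((\<lambda>t. (t-a)*(b-t)) has_real_derivative (a+b-2*t)) (at t)"
      by (auto intro!: derivative_eq_intros simp: algebra_simps)
    from DERIV_sqrt_comp[OF this R] show ?thesis unfolding q_def .
  qed
  have d2: "((\<lambda>t. arcsin ((2*t-a-b)/(b-a))) has_real_derivative (2/(b-a)) / (2*q/(b-a))) (at t)"
  proof -
    have "((\<lambda>t. 2*t-a-b) has_real_derivative 2) (at t)"
      by (auto intro!: derivative_eq_intros)
    from DERIV_cdivide[OF this, of "b-a"]
    have h: "((\<lambda>t. (2*t-a-b)/(b-a)) has_real_derivative 2/(b-a)) (at t)" .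
    have s: "sqrt (1 - ((2*t-a-b)/(b-a))^2) = 2*q/(b-a)"
      unfolding u1 using q ab by simp
    show ?thesis by (rule DERIV_arcsin_comp[OF h _ _ s]) (use ub(1) in \<open>auto simp only: abs_less_iff\<close>)
  qed
  have d3: "((\<lambda>t. arcsin (((2*x-a-b)*(x-t) - 2*P)/((x-t)*(b-a)))) has_real_derivative
           (-2*P/((b-a)*(x-t)^2)) / (2*p*q/((x-t)*(b-a)))) (at t)"
  proof -
    have "((\<lambda>t. ((2*x-a-b)*(x-t) - 2*P)/(x-t)) has_real_derivative -2*P/(x-t)^2) (at t)"
      using sp unfolding s_def by (auto intro!: derivative_eq_intros simp: field_simps power2_eq_square)
    from DERIV_cdivide[OF this, of "b-a"]
    have h: "((\<lambda>t. ((2*x-a-b)*(x-t) - 2*P)/((x-t)*(b-a))) has_real_derivative -2*P/((b-a)*(x-t)^2)) (at t)"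
      by (simp add: field_simps)
    have s: "sqrt (1 - (((2*x-a-b)*(x-t) - 2*P)/((x-t)*(b-a)))^2) = 2*p*q/((x-t)*(b-a))"
      unfolding w1 using q p ab sp by (simp add: s_def)
    show ?thesis by (rule DERIV_arcsin_comp[OF h _ _ s]) (use ub(2) in \<open>auto simp only: abs_less_iff\<close>)
  qed
  have "((\<lambda>t. - sqrt ((t-a)*(b-t)) + (x - (a+b)/2) * arcsin ((2*t-a-b)/(b-a))
            + p * arcsin (((2*x-a-b)*(x-t) - 2*P)/((x-t)*(b-a))))
          has_real_derivative - ((a+b-2*t)/(2*q)) + (x - (a+b)/2) * ((2/(b-a)) / (2*q/(b-a)))
             + p * ((-2*P/((b-a)*(x-t)^2)) / (2*p*q/((x-t)*(b-a))))) (at t)"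
    by (intro DERIV_add DERIV_minus DERIV_cmult d1 d2 d3)
  moreover have "- ((a+b-2*t)/(2*q)) + (x - (a+b)/2) * ((2/(b-a)) / (2*q/(b-a)))
             + p * ((-2*P/((b-a)*(x-t)^2)) / (2*p*q/((x-t)*(b-a)))) = q/(x-t)"
  proof -
    have e1: "(2/(b-a))/(2*q/(b-a)) = 1/q" using ab q by (simp add: field_simps)
    have e2: "p * ((-2*P/((b-a)*(x-t)^2)) / (2*p*q/((x-t)*(b-a)))) = - P/(q*(x-t))"
      using aux_e2[of "b-a" p q "x-t" P] ab q p sp unfolding s_def by simp
    have e3: "- ((a+b-2*t)/(2*q)) + (x - (a+b)/2)*(1/q) - P/(q*(x-t)) = ((t-a)*(b-t))/(q*(x-t))"
      using q sp unfolding s_def P_def by (simp add: field_simps)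
    have e4: "((t-a)*(b-t))/(q*(x-t)) = q/(x-t)" using q sp unfolding s_def
      by (simp add: power2_eq_square flip: q(2))
    show ?thesis using e1 e2 e3 e4 by simp
  qed
  ultimately show ?thesis unfolding p_def q_def P_def by simp
qed

definition Phi :: "real \<Rightarrow> real \<Rightarrow> real \<Rightarrow> real" where
  "Phi a b t = sqrt ((t-a)*(t-b)) - (a+b)/2 * ln (2 * sqrt ((t-a)*(t-b)) + 2*t - a - b)
     - sqrt (a*b) * (ln ((a+b)*t - 2*a*b - 2 * sqrt (a*b) * sqrt ((t-a)*(t-b))) - ln t)"

lemma Phi_pos:
  fixes a b t :: real
  assumes ab: "0 < a" "a < b" and t: "b \<le> t"
  shows "2 * sqrt ((t-a)*(t-b)) + 2*t - a - b > 0"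
    "(a+b)*t - 2*a*b - 2 * sqrt (a*b) * sqrt ((t-a)*(t-b)) > 0"
proof -
  have S: "(t-a)*(t-b) \<ge> 0" using ab t by simp
  show "2 * sqrt ((t-a)*(t-b)) + 2*t - a - b > 0" using ab t real_sqrt_ge_zero[OF S] by linarith
  have y: "(a+b)*t - 2*a*b > 0"
  proof -
    have "(a+b)*t \<ge> (a+b)*b" using ab t by (intro mult_left_mono) auto
    then have "(a+b)*t - 2*a*b \<ge> b*(b-a)" by (simp add: algebra_simps)
    moreover have "b*(b-a) > 0" using ab by simp
    ultimately show ?thesis by linarith
  qed
  have "(2 * sqrt (a*b) * sqrt ((t-a)*(t-b)))^2 = 4*(a*b)*((t-a)*(t-b))"
    using ab S by (simp add: power_mult_distrib)
  also have "\<dots> = ((a+b)*t - 2*a*b)^2 - ((b-a)*t)^2"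
    by (simp add: power2_eq_square algebra_simps)
  also have "\<dots> < ((a+b)*t - 2*a*b)^2"
  proof -
    have "((b-a)*t)^2 > 0" using ab t by simp
    then show ?thesis by linarith
  qed
  finally have sq: "(2 * sqrt (a*b) * sqrt ((t-a)*(t-b)))^2 < ((a+b)*t - 2*a*b)^2" .
  have "2 * sqrt (a*b) * sqrt ((t-a)*(t-b)) < (a+b)*t - 2*a*b"
    using power2_less_imp_less[OF sq] y by simp
  then show "(a+b)*t - 2*a*b - 2 * sqrt (a*b) * sqrt ((t-a)*(t-b)) > 0" by simp
qed

lemma aux_phi_alg:
  fixes a b c q t N :: real
  assumes q: "q > 0" "q^2 = (t-a)*(t-b)" and c: "c > 0" "c^2 = a*b" and t: "t > 0"
    and N: "N = (a+b)*t - 2*a*b - 2*c*q" "N > 0"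
  shows "(2*t-a-b)/(2*q) - (a+b)/2 * (1/q) - c*(((a+b) - c*((2*t-a-b)/q))/N - 1/t) = q/t"
proof -
  have k: "q*(t*((a+b) - c*((2*t-a-b)/q)) - N) = -c*N"
  proof -
    have "q*(t*((a+b) - c*((2*t-a-b)/q)) - N) = (a+b)*t*q - c*t*(2*t-a-b) - q*N"
      using q by (simp add: field_simps)
    also have "\<dots> = -c*t*(2*t-a-b) + 2*a*b*q + 2*c*q^2"
      unfolding N(1) by (simp add: algebra_simps power2_eq_square)
    also have "\<dots> = -c*((a+b)*t - 2*a*b) + 2*(a*b)*q"
      unfolding q(2) by (simp add: algebra_simps)
    also have "\<dots> = -c*((a+b)*t - 2*a*b) + 2*c^2*q"
      unfolding c(2) ..
    also have "\<dots> = -c*N"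
      unfolding N(1) by (simp add: algebra_simps power2_eq_square)
    finally show ?thesis .
  qed
  have k2: "((a+b) - c*((2*t-a-b)/q))/N - 1/t = -c/(q*t)"
  proof -
    have "((a+b) - c*((2*t-a-b)/q))/N - 1/t = (t*((a+b) - c*((2*t-a-b)/q)) - N)/(t*N)"
      using t N(2) by (simp add: field_simps)
    also have "\<dots> = (q*(t*((a+b) - c*((2*t-a-b)/q)) - N))/(q*t*N)"
      using q by simp
    also have "\<dots> = -c/(q*t)" unfolding k using N(2) by simp
    finally show ?thesis .
  qed
  have "(2*t-a-b)/(2*q) - (a+b)/2 * (1/q) - c*(-c/(q*t)) = (t*t - (a+b)*t + c^2)/(q*t)"
    using q t by (simp add: field_simps power2_eq_square)
  also have "\<dots> = q^2/(q*t)" unfolding c(2) q(2) by (simp add: algebra_simps)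
  also have "\<dots> = q/t" using q(1) by (simp add: power2_eq_square)
  finally show ?thesis unfolding k2 .
qed

lemma Phi_deriv:
  fixes a b t :: real
  assumes ab: "0 < a" "a < b" and t: "b < t"
  shows "(Phi a b has_real_derivative sqrt((t-a)*(t-b))/t) (at t)"
proof -
  define q where "q = sqrt((t-a)*(t-b))"
  define c where "c = sqrt(a*b)"
  define N where "N = (a+b)*t - 2*a*b - 2*c*q"
  have S: "(t-a)*(t-b) > 0" using ab t by simp
  have q: "q > 0" "q^2 = (t-a)*(t-b)" using S by (auto simp: q_def)
  have c: "c > 0" "c^2 = a*b" using ab by (auto simp: c_def)
  have tp: "t > 0" using ab t by simp
  have pos: "2*q + 2*t - a - b > 0" "N > 0" using Phi_pos[OF ab, of t] t unfolding q_def c_def N_def by auto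
  have d1: "((\<lambda>t. sqrt ((t-a)*(t-b))) has_real_derivative (2*t-a-b)/(2*q)) (at t)"
  proof -
    have "((\<lambda>t. (t-a)*(t-b)) has_real_derivative (2*t-a-b)) (at t)"
      by (auto intro!: derivative_eq_intros simp: algebra_simps)
    from DERIV_sqrt_comp[OF this S] show ?thesis unfolding q_def .
  qed
  have d2: "((\<lambda>t. ln (2 * sqrt ((t-a)*(t-b)) + 2*t - a - b)) has_real_derivative 1/q) (at t)"
  proof -
    have l: "((\<lambda>t. 2*t - a - b) has_real_derivative 2) (at t)"
      by (auto intro!: derivative_eq_intros)
    have "((\<lambda>t. 2 * sqrt ((t-a)*(t-b)) + (2*t - a - b)) has_real_derivative 2*((2*t-a-b)/(2*q)) + 2) (at t)"
      by (intro DERIV_add DERIV_cmult d1 l)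
    then have "((\<lambda>t. 2 * sqrt ((t-a)*(t-b)) + 2*t - a - b) has_real_derivative 2*((2*t-a-b)/(2*q)) + 2) (at t)"
      unfolding add_diff_eq .
    from DERIV_ln_comp[OF this] pos(1) have
      "((\<lambda>t. ln (2 * sqrt ((t-a)*(t-b)) + 2*t - a - b)) has_real_derivative
         (2*((2*t-a-b)/(2*q)) + 2)/(2*q + 2*t - a - b)) (at t)" unfolding q_def by simp
    moreover have "(2*((2*t-a-b)/(2*q)) + 2)/(2*q + 2*t - a - b) = 1/q"
    proof -
      have "2*((2*t-a-b)/(2*q)) + 2 = (2*q + 2*t - a - b)/q" using q(1) by (simp add: field_simps)
      then show ?thesis using pos(1) by simp
    qed
    ultimately show ?thesis by simp
  qed
  have d3: "((\<lambda>t. ln ((a+b)*t - 2*a*b - 2 * c * sqrt ((t-a)*(t-b)))) has_real_derivative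
         ((a+b) - c*((2*t-a-b)/q))/N) (at t)"
  proof -
    have l: "((\<lambda>t. (a+b)*t - 2*a*b) has_real_derivative a+b) (at t)"
      by (auto intro!: derivative_eq_intros)
    have "((\<lambda>t. (a+b)*t - 2*a*b - 2 * c * sqrt ((t-a)*(t-b))) has_real_derivative (a+b) - 2*c*((2*t-a-b)/(2*q))) (at t)"
      by (intro DERIV_diff DERIV_cmult d1 l)
    from DERIV_ln_comp[OF this] pos(2) show ?thesis unfolding q_def N_def by simp
  qed
  have "(Phi a b has_real_derivative (2*t-a-b)/(2*q) - (a+b)/2 * (1/q) - c*(((a+b) - c*((2*t-a-b)/q))/N - 1/t)) (at t)"
    unfolding Phi_def c_def[symmetric]
    using DERIV_ln_divide[OF tp] by (intro DERIV_diff DERIV_cmult d1 d2 d3)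
  then show ?thesis using aux_phi_alg[OF q c tp N_def pos(2)] unfolding q_def by simp
qed

lemma LBINT_eq_integral:
  fixes f :: "real \<Rightarrow> real"
  assumes "a \<le> b" "continuous_on {a..b} f"
  shows "(LBINT t=a..b. f t) = integral {a..b} f"
proof -
  have "set_integrable lborel {a..b} f" unfolding set_integrable_def
    using borel_integrable_compact[OF compact_Icc assms(2)] by simp
  then show ?thesis using interval_integral_Icc[OF assms(1)] set_borel_integral_eq_integral(2) by metis
qed

lemma u_range:
  fixes a b t :: real
  assumes "a < b" "a \<le> t" "t \<le> b"
  shows "-1 \<le> (2*t-a-b)/(b-a) \<and> (2*t-a-b)/(b-a) \<le> 1"
  using assms by (simp add: field_simps)

lemma v_range:
  fixes a b t :: real
  assumes "0 < a" "a < b" "a \<le> t" "t \<le> b"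
  shows "-1 \<le> ((a+b)*t - 2*a*b)/((b-a)*t) \<and> ((a+b)*t - 2*a*b)/((b-a)*t) \<le> 1"
proof -
  have tp: "t > 0" "(b-a)*t > 0" using assms by auto
  have "a*b \<le> b*t" using assms by (simp add: mult_left_mono mult.commute)
  moreover have "a*t \<le> a*b" using assms by (simp add: mult_left_mono)
  ultimately show ?thesis using tp by (simp add: field_simps)
qed

lemma w_range:
  fixes a b t x :: real
  assumes "0 < a" "a < b" "a \<le> t" "t \<le> b" "b < x"
  shows "-1 \<le> ((2*x-a-b)*(x-t) - 2*((x-a)*(x-b)))/((x-t)*(b-a))
     \<and> ((2*x-a-b)*(x-t) - 2*((x-a)*(x-b)))/((x-t)*(b-a)) \<le> 1"
proof -
  have tp: "(x-t)*(b-a) > 0" using assms by auto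
  have "(x-a)*(x-b) \<le> (x-a)*(x-t)" using assms by (intro mult_left_mono) auto
  moreover have "(x-b)*(x-t) \<le> (x-b)*(x-a)" using assms by (intro mult_left_mono) auto
  ultimately show ?thesis using tp by (simp add: field_simps)
qed

lemma int_F:
  fixes a b :: real
  assumes ab: "0 < a" "a < b"
  shows "((\<lambda>t. sqrt((t-a)*(b-t))/t) has_integral pi*((a+b)/2 - sqrt(a*b))) {a..b}"
proof -
  define F where "F = (\<lambda>t. sqrt ((t-a)*(b-t)) + (a+b)/2 * arcsin ((2*t-a-b)/(b-a))
            - sqrt(a*b) * arcsin (((a+b)*t - 2*a*b)/((b-a)*t)))"
  have "((\<lambda>t. sqrt((t-a)*(b-t))/t) has_integral F b - F a) {a..b}"
  proof (rule fundamental_theorem_of_calculus_interior)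
    show "a \<le> b" using ab by simp
    show "continuous_on {a..b} F" unfolding F_def
      using u_range[OF ab(2)] v_range[OF ab] ab
      by (intro continuous_intros) auto
    show "(F has_vector_derivative sqrt((t-a)*(b-t))/t) (at t)" if "t \<in> {a<..<b}" for t
      using F_deriv[OF ab, of t] that unfolding F_def has_real_derivative_iff_has_vector_derivative
      by auto
  qed
  moreover have "F b - F a = pi*((a+b)/2 - sqrt(a*b))"
  proof -
    have e: "(2*b-a-b)/(b-a) = 1" "((a+b)*b - 2*a*b)/((b-a)*b) = 1"
       "(2*a-a-b)/(b-a) = -1" "((a+b)*a - 2*a*b)/((b-a)*a) = -1"
      using ab by (simp_all add: field_simps)
    show ?thesis unfolding F_def using e by (simp add: arcsin_minus_1 algebra_simps)
  qed
  ultimately show ?thesis by simp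
qed

lemma int_G:
  fixes a b x :: real
  assumes ab: "0 < a" "a < b" and x: "b < x"
  shows "((\<lambda>t. sqrt((t-a)*(b-t))/(x-t)) has_integral pi*(x - (a+b)/2 - sqrt((x-a)*(x-b)))) {a..b}"
proof -
  define G where "G = (\<lambda>t. - sqrt ((t-a)*(b-t)) + (x - (a+b)/2) * arcsin ((2*t-a-b)/(b-a))
            + sqrt((x-a)*(x-b)) * arcsin (((2*x-a-b)*(x-t) - 2*((x-a)*(x-b)))/((x-t)*(b-a))))"
  have "((\<lambda>t. sqrt((t-a)*(b-t))/(x-t)) has_integral G b - G a) {a..b}"
  proof (rule fundamental_theorem_of_calculus_interior)
    show "a \<le> b" using ab by simp
    show "continuous_on {a..b} G" unfolding G_def
      using u_range[OF ab(2)] w_range[OF ab _ _ x] ab x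
      by (intro continuous_intros) auto
    show "(G has_vector_derivative sqrt((t-a)*(b-t))/(x-t)) (at t)" if "t \<in> {a<..<b}" for t
      using G_deriv[OF ab _ _ x, of t] that unfolding G_def has_real_derivative_iff_has_vector_derivative
      by auto
  qed
  moreover have "G b - G a = pi*(x - (a+b)/2 - sqrt((x-a)*(x-b)))"
  proof -
    have e: "(2*b-a-b)/(b-a) = 1" "((2*x-a-b)*(x-b) - 2*((x-a)*(x-b)))/((x-b)*(b-a)) = -1"
       "(2*a-a-b)/(b-a) = -1" "((2*x-a-b)*(x-a) - 2*((x-a)*(x-b)))/((x-a)*(b-a)) = 1"
    proof -
      have n1: "(2*x-a-b)*(x-b) - 2*((x-a)*(x-b)) = -((x-b)*(b-a))" by (simp add: algebra_simps)
      have n2: "(2*x-a-b)*(x-a) - 2*((x-a)*(x-b)) = (x-a)*(b-a)" by (simp add: algebra_simps)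
      have nz: "(x-b)*(b-a) \<noteq> 0" "(x-a)*(b-a) \<noteq> 0" using ab x by auto
      show "(2*b-a-b)/(b-a) = 1" "(2*a-a-b)/(b-a) = -1" using ab by (simp_all add: field_simps)
      show "((2*x-a-b)*(x-b) - 2*((x-a)*(x-b)))/((x-b)*(b-a)) = -1" unfolding n1 using nz by simp
      show "((2*x-a-b)*(x-a) - 2*((x-a)*(x-b)))/((x-a)*(b-a)) = 1" unfolding n2 using nz by simp
    qed
    show ?thesis unfolding G_def using e by (simp add: arcsin_minus_1 algebra_simps)
  qed
  ultimately show ?thesis by simp
qed

lemma int_stieltjes:
  fixes a b x :: real
  assumes ab: "0 < a" "a < b" and x: "b < x"
  shows "((\<lambda>t. sqrt((t-a)*(b-t))/(2*pi*t)/(x-t)) has_integral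
            (x - sqrt(a*b) - sqrt((x-a)*(x-b)))/(2*x)) {a..b}"
proof -
  have "((\<lambda>t. 1/(2*pi*x) * (sqrt((t-a)*(b-t))/t + sqrt((t-a)*(b-t))/(x-t))) has_integral
          1/(2*pi*x) * (pi*((a+b)/2 - sqrt(a*b)) + pi*(x - (a+b)/2 - sqrt((x-a)*(x-b))))) {a..b}"
    by (intro has_integral_mult_right has_integral_add int_F int_G ab x)
  moreover have "1/(2*pi*x) * (pi*((a+b)/2 - sqrt(a*b)) + pi*(x - (a+b)/2 - sqrt((x-a)*(x-b))))
      = (x - sqrt(a*b) - sqrt((x-a)*(x-b)))/(2*x)"
    using ab x by (simp add: field_simps)
  moreover have "1/(2*pi*x) * (sqrt((t-a)*(b-t))/t + sqrt((t-a)*(b-t))/(x-t))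
      = sqrt((t-a)*(b-t))/(2*pi*t)/(x-t)" if "t \<in> {a..b}" for t
  proof -
    have "t > 0" "x - t > 0" "x > 0" using that ab x by auto
    then show ?thesis by (simp add: field_simps)
  qed
  ultimately show ?thesis using has_integral_cong by (metis (no_types, lifting))
qed

lemma Phi_cont: "0 < a \<Longrightarrow> a < b \<Longrightarrow> continuous_on {b..} (Phi a b)"
  unfolding Phi_def using Phi_pos[of a b]
  by (intro continuous_intros) (auto intro: order.strict_trans2 simp: less_imp_neq[symmetric])

lemma LBINT_Phi:
  fixes a b x :: real
  assumes ab: "0 < a" "a < b" and x: "b \<le> x"
  shows "(LBINT t=b..x. sqrt((t-a)*(t-b))/t) = Phi a b x - Phi a b b"
proof (cases "x = b")
  case True then show ?thesis by simp
next
  case False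
  have c: "continuous_on {b..x} (\<lambda>t. sqrt((t-a)*(t-b))/t)"
    using ab by (intro continuous_intros) auto
  have "((\<lambda>t. sqrt((t-a)*(t-b))/t) has_integral Phi a b x - Phi a b b) {b..x}"
  proof (rule fundamental_theorem_of_calculus_interior)
    show "b \<le> x" by fact
    show "continuous_on {b..x} (Phi a b)" using Phi_cont[OF ab] by (rule continuous_on_subset) auto
    show "(Phi a b has_vector_derivative sqrt((t-a)*(t-b))/t) (at t)" if "t \<in> {b<..<x}" for t
      using Phi_deriv[OF ab, of t] that unfolding has_real_derivative_iff_has_vector_derivative
      by auto
  qed
  then show ?thesis using LBINT_eq_integral[OF x c] by (simp add: integral_unique)
qed

definition rho :: "real \<Rightarrow> real \<Rightarrow> real \<Rightarrow> real" where
  "rho a b t = sqrt((t-a)*(b-t))/(2*pi*t)"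

lemma rho_cont: "0 < a \<Longrightarrow> continuous_on {a..b} (rho a b)"
  unfolding rho_def by (intro continuous_intros) auto

lemma sqab: "0 \<le> a \<Longrightarrow> 0 \<le> b \<Longrightarrow> (sqrt b - sqrt a)^2 = a + b - 2* sqrt(a*b)"
  by (simp add: power2_eq_square algebra_simps real_sqrt_mult)

lemma mass:
  assumes ab: "0 < a" "a < b"
  shows "(rho a b has_integral (sqrt b - sqrt a)^2/4) {a..b}"
proof -
  have h: "((\<lambda>t. 1/(2*pi) * (sqrt((t-a)*(b-t))/t)) has_integral 1/(2*pi) * (pi*((a+b)/2 - sqrt(a*b)))) {a..b}"
    by (intro has_integral_mult_right int_F ab)
  have e: "1/(2*pi) * (pi*((a+b)/2 - sqrt(a*b))) = (sqrt b - sqrt a)^2/4"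
  proof -
    have "1/(2*pi) * (pi*((a+b)/2 - sqrt(a*b))) = ((a+b)/2 - sqrt(a*b))/2" by simp
    also have "\<dots> = (a + b - 2* sqrt(a*b))/4" by (simp add: field_simps)
    also have "\<dots> = (sqrt b - sqrt a)^2/4" using ab by (simp add: sqab)
    finally show ?thesis .
  qed
  have f: "(\<lambda>t. 1/(2*pi) * (sqrt((t-a)*(b-t))/t)) = rho a b"
    by (rule ext) (simp add: rho_def)
  show ?thesis using h unfolding e f .
qed

lemma sqrt_ln_bound:
  fixes s K :: real
  assumes "0 < s" "s \<le> K"
  shows "sqrt s * \<bar>ln s\<bar> \<le> 2 + K^2"
proof (cases "s \<ge> 1")
  case True
  have l: "0 \<le> ln s" "ln s \<le> s" using True ln_le_minus_one[of s] by auto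
  have "s \<le> s* s" using True by (simp add: mult_le_cancel_left1)
  then have "sqrt s \<le> sqrt (s* s)" by (rule real_sqrt_le_mono)
  then have "sqrt s \<le> s" using True by simp
  then have "sqrt s * \<bar>ln s\<bar> \<le> s * s" using l by (intro mult_mono) auto
  also have "\<dots> \<le> K * K" using assms by (intro mult_mono) auto
  finally show ?thesis by (simp add: power2_eq_square)
next
  case False
  have sp: "sqrt s > 0" using assms by simp
  have "ln (1/sqrt s) \<le> 1/sqrt s - 1" using sp by (intro ln_le_minus_one) auto
  moreover have "ln (1/sqrt s) = - ln s / 2" using assms by (simp add: ln_div ln_sqrt)
  moreover have "ln s < 0" using False assms by simp
  ultimately have "\<bar>ln s\<bar> \<le> 2 / sqrt s" by (simp add: field_simps)
  then have "sqrt s * \<bar>ln s\<bar> \<le> sqrt s * (2 / sqrt s)" using sp by (intro mult_left_mono) auto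
  also have "\<dots> = 2" using sp by simp
  finally show ?thesis using zero_le_power2[of K] by linarith
qed

lemma bound_b:
  assumes ab: "0 < a" "a < b" and t: "t \<in> {a..b}"
  shows "\<bar>rho a b t * ln (1/\<bar>b-t\<bar>)\<bar> \<le> sqrt(b-a)*(2+(b-a)^2)/(2*pi*a)"
proof (cases "t = b")
  case True then show ?thesis using ab by (simp add: rho_def)
next
  case False
  define s where "s = b - t"
  have s: "0 < s" "s \<le> b - a" using t False by (auto simp: s_def)
  have tp: "t > 0" using t ab by auto
  have l: "ln (1/\<bar>b-t\<bar>) = - ln s" using s by (simp add: s_def ln_div)
  define X where "X = sqrt(t-a)/(2*pi*t)"
  have r: "rho a b t = X * sqrt s"
    by (simp add: rho_def s_def real_sqrt_mult X_def)
  have r1: "X \<le> sqrt(b-a)/(2*pi*a)"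
    unfolding X_def using t ab by (intro frac_le) auto
  have r0: "0 \<le> X" unfolding X_def using t tp by auto
  have "\<bar>rho a b t * ln (1/\<bar>b-t\<bar>)\<bar> = X * (sqrt s * \<bar>ln s\<bar>)"
    unfolding r l
    by (simp only: abs_mult abs_minus_cancel abs_of_nonneg[OF r0]
        abs_of_nonneg[OF real_sqrt_ge_zero[OF less_imp_le[OF s(1)]]] mult.assoc)
  also have "\<dots> \<le> sqrt(b-a)/(2*pi*a) * (2+(b-a)^2)"
    using r1 r0 sqrt_ln_bound[OF s] s(1) by (intro mult_mono) auto
  finally show ?thesis by simp
qed

lemma integrable_pot:
  assumes ab: "0 < a" "a < b" and x: "b \<le> x"
  shows "set_integrable lborel {a..b} (\<lambda>t. rho a b t * ln (1/\<bar>x-t\<bar>))"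
proof (cases "x = b")
  case False
  then have x': "b < x" using x by simp
  have "continuous_on {a..b} (\<lambda>t. rho a b t * ln (1/\<bar>x-t\<bar>))"
    using x' by (intro continuous_intros rho_cont ab) auto
  then show ?thesis unfolding set_integrable_def
    by (rule borel_integrable_compact[OF compact_Icc])
next
  case True
  show ?thesis unfolding set_integrable_def True
  proof (rule integrableI_bounded_set[where A="{a..b}" and B="sqrt(b-a)*(2+(b-a)^2)/(2*pi*a)"])
    show "{a..b} \<in> sets lborel" by simp
    show "(\<lambda>t. indicat_real {a..b} t *\<^sub>R (rho a b t * ln (1 / \<bar>b - t\<bar>))) \<in> borel_measurable lborel"
      unfolding rho_def by measurable
    show "emeasure lborel {a..b} < \<infinity>" using ab by (simp add: emeasure_lborel_Icc)
    show "AE t in lborel. t \<in> {a..b} \<longrightarrow> norm (indicat_real {a..b} t *\<^sub>R (rho a b t * ln (1 / \<bar>b - t\<bar>)))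
       \<le> sqrt(b-a)*(2+(b-a)^2)/(2*pi*a)"
      using bound_b[OF ab] by (intro AE_I2) auto
    show "AE t in lborel. t \<notin> {a..b} \<longrightarrow> indicat_real {a..b} t *\<^sub>R (rho a b t * ln (1 / \<bar>b - t\<bar>)) = 0"
      by (intro AE_I2) auto
  qed
qed

lemma pot_eq:
  assumes ab: "0 < a" "a < b" and x: "b \<le> x"
  shows "log_potential (mp_measure a b) x = integral {a..b} (\<lambda>t. rho a b t * ln (1/\<bar>x-t\<bar>))"
proof -
  have "log_potential (mp_measure a b) x =
      (LINT t|lborel. (indicator {a..b} t * sqrt ((t - a) * (b - t)) / (2 * pi * t)) *\<^sub>R ln (1/\<bar>x-t\<bar>))"
    unfolding log_potential_def mp_measure_def
  proof (rule integral_density)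
    show "(\<lambda>t. ln (1 / \<bar>x - t\<bar>)) \<in> borel_measurable lborel" by measurable
    show "(\<lambda>t. indicat_real {a..b} t * sqrt ((t - a) * (b - t)) / (2 * pi * t)) \<in> borel_measurable lborel"
      by measurable
    show "AE t in lborel. 0 \<le> indicat_real {a..b} t * sqrt ((t - a) * (b - t)) / (2 * pi * t)"
      using ab by (intro AE_I2) (auto simp: indicator_def)
  qed
  also have "\<dots> = (LINT t|lborel. indicator {a..b} t *\<^sub>R (rho a b t * ln (1/\<bar>x-t\<bar>)))"
    by (intro Bochner_Integration.integral_cong) (auto simp: rho_def indicator_def)
  also have "\<dots> = integral {a..b} (\<lambda>t. rho a b t * ln (1/\<bar>x-t\<bar>))"
    using set_borel_integral_eq_integral(2)[OF integrable_pot[OF ab x]]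
    unfolding set_lebesgue_integral_def .
  finally show ?thesis .
qed

definition Uf :: "real \<Rightarrow> real \<Rightarrow> real \<Rightarrow> real" where
  "Uf a b x = integral {a..b} (\<lambda>t. rho a b t * ln (1/\<bar>x-t\<bar>))"

lemma U_deriv:
  assumes ab: "0 < a" "a < b" and y: "b < y"
  shows "(Uf a b has_real_derivative -((y - sqrt(a*b) - sqrt((y-a)*(y-b)))/(2*y))) (at y)"
proof -
  define f where "f = (\<lambda>x t. -(rho a b t * ln (x - t)))"
  define fx where "fx = (\<lambda>x t. -(rho a b t * (1/(x - t))))"
  have L: "((\<lambda>x. integral (cbox a b) (f x)) has_field_derivative integral (cbox a b) (fx y)) (at y within {b<..})"
  proof (rule leibniz_rule_field_derivative)
    fix x t assume x: "x \<in> {b<..}" and t: "t \<in> cbox a b"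
    have xt: "x - t > 0" using x t by auto
    have "((\<lambda>x. x - t) has_real_derivative 1) (at x)" by (auto intro!: derivative_eq_intros)
    from DERIV_ln_comp[OF this xt] have "((\<lambda>x. ln (x - t)) has_real_derivative 1/(x-t)) (at x)" .
    then have "((\<lambda>x. f x t) has_real_derivative fx x t) (at x)"
      unfolding f_def fx_def by (intro DERIV_minus DERIV_cmult)
    then show "((\<lambda>x. f x t) has_field_derivative fx x t) (at x within {b<..})"
      by (rule has_field_derivative_at_within)
  next
    fix x assume x: "x \<in> {b<..}"
    have "continuous_on {a..b} (f x)" unfolding f_def
      using x ab by (intro continuous_intros rho_cont) auto
    then show "f x integrable_on cbox a b" by (simp add: integrable_continuous_interval)
  next
    have e: "(\<lambda>(x, t). fx x t) = (\<lambda>z. -(sqrt((snd z - a)*(b - snd z))/(2*pi* snd z) * (1/(fst z - snd z))))"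
      by (auto simp: fx_def rho_def fun_eq_iff)
    show "continuous_on ({b<..} \<times> cbox a b) (\<lambda>(x, t). fx x t)"
      unfolding e using ab by (intro continuous_intros) auto
  next
    show "y \<in> {b<..}" using y by simp
    show "convex {b<..}" by simp
  qed
  then have L': "((\<lambda>x. integral {a..b} (f x)) has_real_derivative integral {a..b} (fx y)) (at y)"
    using at_within_open[of y "{b<..}"] y by simp
  have i: "integral {a..b} (fx y) = -((y - sqrt(a*b) - sqrt((y-a)*(y-b)))/(2*y))"
  proof -
    have "((\<lambda>t. -(sqrt((t-a)*(b-t))/(2*pi*t)/(y-t))) has_integral
          -((y - sqrt(a*b) - sqrt((y-a)*(y-b)))/(2*y))) {a..b}"
      by (intro has_integral_neg int_stieltjes ab y)
    then have "integral {a..b} (\<lambda>t. -(sqrt((t-a)*(b-t))/(2*pi*t)/(y-t))) =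
          -((y - sqrt(a*b) - sqrt((y-a)*(y-b)))/(2*y))" by (rule integral_unique)
    moreover have "fx y = (\<lambda>t. -(sqrt((t-a)*(b-t))/(2*pi*t)/(y-t)))"
      by (auto simp: fx_def rho_def fun_eq_iff)
    ultimately show ?thesis by metis
  qed
  show ?thesis
  proof (rule has_field_derivative_transform_within_open[OF L'[unfolded i]])
    show "open {b<..}" by simp
    show "y \<in> {b<..}" using y by simp
    fix x assume x: "x \<in> {b<..}"
    show "integral {a..b} (f x) = Uf a b x" unfolding Uf_def
    proof (rule integral_cong)
      fix t assume t: "t \<in> {a..b}"
      then have "x - t > 0" using x by auto
      then show "f x t = rho a b t * ln (1/\<bar>x-t\<bar>)"
        by (simp add: f_def ln_div)
    qed
  qed
qed

lemma ln1p_sqrt: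
  fixes z :: real
  assumes "0 \<le> z"
  shows "ln (1 + z) \<le> 2 * sqrt z"
proof -
  have sz: "0 \<le> sqrt z" using assms by simp
  have "1 + z \<le> (1 + sqrt z)^2" using assms by (simp add: power2_eq_square algebra_simps)
  moreover have "0 < (1 + sqrt z)^2" using sz by (intro zero_less_power) linarith
  ultimately have "ln (1 + z) \<le> ln ((1 + sqrt z)^2)" using assms by (subst ln_le_cancel_iff) auto
  also have "\<dots> = 2 * ln (1 + sqrt z)" by (simp add: ln_realpow)
  also have "\<dots> \<le> 2 * sqrt z" using ln_add_one_self_le_self[OF sz] by simp
  finally show ?thesis .
qed

lemma U_cont_b:
  assumes ab: "0 < a" "a < b"
  shows "(Uf a b \<longlongrightarrow> Uf a b b) (at b within {b..})"
proof -
  define K0 where "K0 = sqrt(b-a)/(2*pi*a)"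
  have K0: "K0 \<ge> 0" using ab by (simp add: K0_def)
  have bnd: "norm (Uf a b y - Uf a b b) \<le> 2*K0* sqrt(y-b) * (b - a)" if y: "y > b" for y
  proof -
    have iy: "(\<lambda>t. rho a b t * ln (1/\<bar>y-t\<bar>)) integrable_on {a..b}"
      using set_borel_integral_eq_integral(1)[OF integrable_pot[OF ab, of y]] y by simp
    have ib: "(\<lambda>t. rho a b t * ln (1/\<bar>b-t\<bar>)) integrable_on {a..b}"
      using set_borel_integral_eq_integral(1)[OF integrable_pot[OF ab, of b]] by simp
    have d: "Uf a b y - Uf a b b = integral {a..b} (\<lambda>t. rho a b t * ln (1/\<bar>y-t\<bar>) - rho a b t * ln (1/\<bar>b-t\<bar>))"
      unfolding Uf_def by (rule integral_diff[OF iy ib, symmetric])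
    have pw: "norm (rho a b t * ln (1/\<bar>y-t\<bar>) - rho a b t * ln (1/\<bar>b-t\<bar>)) \<le> 2*K0* sqrt(y-b)"
      if t: "t \<in> {a..b} - {b}" for t
    proof -
        define s where "s = b - t"
        define dd where "dd = y - b"
        have s: "s > 0" using t by (auto simp: s_def)
        have dd: "dd > 0" using y by (simp add: dd_def)
        have tp: "t > 0" using t ab by auto
        define X where "X = sqrt(t-a)/(2*pi*t)"
        have r: "rho a b t = X * sqrt s"
          by (simp add: rho_def s_def real_sqrt_mult X_def)
        have r1: "X \<le> K0"
          unfolding X_def K0_def using t ab by (intro frac_le) auto
        have r0: "0 \<le> X" unfolding X_def using t tp by auto
        have l: "ln (1/\<bar>y-t\<bar>) - ln (1/\<bar>b-t\<bar>) = - ln (1 + dd/s)"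
        proof -
          have "\<bar>y-t\<bar> = s + dd" "\<bar>b-t\<bar> = s" using s dd by (auto simp: s_def dd_def)
          moreover have "1 + dd/s = (s+dd)/s" using s by (simp add: field_simps)
          ultimately show ?thesis using s dd by (simp add: ln_div)
        qed
        have lp: "0 \<le> ln (1 + dd/s)" using s dd by simp
        have "norm (rho a b t * ln (1/\<bar>y-t\<bar>) - rho a b t * ln (1/\<bar>b-t\<bar>)) = X * (sqrt s * ln (1 + dd/s))"
          unfolding right_diff_distrib[symmetric] l r using r0 s lp by (simp add: abs_mult)
        also have "\<dots> \<le> X * (sqrt s * (2 * sqrt (dd/s)))"
          using ln1p_sqrt[of "dd/s"] s dd r0 by (intro mult_left_mono) auto
        also have "sqrt s * (2 * sqrt (dd/s)) = 2 * sqrt dd"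
          using s by (simp add: real_sqrt_mult[symmetric])
        also have "X * (2 * sqrt dd) \<le> K0 * (2 * sqrt dd)"
          using r1 dd by (intro mult_right_mono) auto
        finally show ?thesis by (simp add: dd_def)
    qed
    have hi: "((\<lambda>t. rho a b t * ln (1/\<bar>y-t\<bar>) - rho a b t * ln (1/\<bar>b-t\<bar>)) has_integral
          integral {a..b} (\<lambda>t. rho a b t * ln (1/\<bar>y-t\<bar>) - rho a b t * ln (1/\<bar>b-t\<bar>))) {a..b}"
      using integrable_diff[OF iy ib] by (simp add: has_integral_integral)
    have B0: "0 \<le> 2*K0* sqrt(y-b)" using K0 y by simp
    have "norm (integral {a..b} (\<lambda>t. rho a b t * ln (1/\<bar>y-t\<bar>) - rho a b t * ln (1/\<bar>b-t\<bar>)))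
        \<le> 2*K0* sqrt(y-b) * (b - a)"
      using has_integral_bound_real[OF B0 _ hi pw, of "{b}"] ab by simp
    then show ?thesis using d ab by simp
  qed
  have "((\<lambda>y. Uf a b y - Uf a b b) \<longlongrightarrow> 0) (at b within {b..})"
  proof (rule Lim_null_comparison)
    show "\<forall>\<^sub>F y in at b within {b..}. norm (Uf a b y - Uf a b b) \<le> 2*K0* sqrt(y-b) * (b - a)"
      unfolding eventually_at_filter using bnd by (auto intro!: always_eventually)
    have "((\<lambda>y. 2*K0* sqrt(y-b) * (b - a)) \<longlongrightarrow> 2*K0* sqrt(b-b) * (b - a)) (at b within {b..})"
      by (intro tendsto_intros)
    then show "((\<lambda>y. 2*K0* sqrt(y-b) * (b - a)) \<longlongrightarrow> 0) (at b within {b..})" by simp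
  qed
  then show ?thesis using Lim_null by blast
qed

lemma lim_U:
  assumes ab: "0 < a" "a < b"
  shows "((\<lambda>x. Uf a b x + (sqrt b - sqrt a)^2/4 * ln x) \<longlongrightarrow> 0) at_top"
proof -
  define m where "m = (sqrt b - sqrt a)^2/4"
  have mi: "integral {a..b} (rho a b) = m" unfolding m_def using mass[OF ab] by (rule integral_unique)
  have m0: "m \<ge> 0" by (simp add: m_def)
  have rho0: "rho a b t \<ge> 0" if "t \<in> {a..b}" for t using that ab by (auto simp: rho_def)
  have eq: "Uf a b x + m * ln x = integral {a..b} (\<lambda>t. rho a b t * ln (x/(x-t)))" if x: "x > b" for x
  proof -
    have i1: "(\<lambda>t. rho a b t * ln (1/\<bar>x-t\<bar>)) integrable_on {a..b}"
      using x ab by (intro integrable_continuous_interval continuous_intros rho_cont) auto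
    have i2: "(\<lambda>t. rho a b t * ln x) integrable_on {a..b}"
      using x ab by (intro integrable_continuous_interval continuous_intros rho_cont) auto
    have "m * ln x = integral {a..b} (\<lambda>t. rho a b t * ln x)"
      unfolding mi[symmetric] by (simp add: integral_mult_left)
    then have "Uf a b x + m * ln x = integral {a..b} (\<lambda>t. rho a b t * ln (1/\<bar>x-t\<bar>) + rho a b t * ln x)"
      unfolding Uf_def using integral_add[OF i1 i2] by simp
    also have "\<dots> = integral {a..b} (\<lambda>t. rho a b t * ln (x/(x-t)))"
    proof (rule integral_cong)
      fix t assume t: "t \<in> {a..b}"
      then have "x - t > 0" "x > 0" using x ab by auto
      then show "rho a b t * ln (1/\<bar>x-t\<bar>) + rho a b t * ln x = rho a b t * ln (x/(x-t))"
        by (simp add: ln_div algebra_simps)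
    qed
    finally show ?thesis .
  qed
  have lo: "0 \<le> integral {a..b} (\<lambda>t. rho a b t * ln (x/(x-t)))" if x: "x > b" for x
  proof (rule integral_nonneg)
    show "(\<lambda>t. rho a b t * ln (x/(x-t))) integrable_on {a..b}"
      using x ab by (intro integrable_continuous_interval continuous_intros rho_cont) auto
    fix t assume t: "t \<in> {a..b}"
    then have "x - t > 0" "x - t \<le> x" using x ab by auto
    then have "ln (x/(x-t)) \<ge> 0" by simp
    then show "0 \<le> rho a b t * ln (x/(x-t))" using rho0[OF t] by simp
  qed
  have hi: "integral {a..b} (\<lambda>t. rho a b t * ln (x/(x-t))) \<le> m * ln (x/(x-b))" if x: "x > b" for x
  proof -
    have "integral {a..b} (\<lambda>t. rho a b t * ln (x/(x-t))) \<le> integral {a..b} (\<lambda>t. rho a b t * ln (x/(x-b)))"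
    proof (rule integral_le)
      show "(\<lambda>t. rho a b t * ln (x/(x-t))) integrable_on {a..b}"
        using x ab by (intro integrable_continuous_interval continuous_intros rho_cont) auto
      show "(\<lambda>t. rho a b t * ln (x/(x-b))) integrable_on {a..b}"
        using x ab by (intro integrable_continuous_interval continuous_intros rho_cont) auto
      fix t assume t: "t \<in> {a..b}"
      then have xt: "x - t > 0" "x - b \<le> x - t" "x > 0" "x - b > 0" using x ab by auto
      then have "x/(x-t) \<le> x/(x-b)" by (intro divide_left_mono) auto
      then have "ln (x/(x-t)) \<le> ln (x/(x-b))" using xt by (subst ln_le_cancel_iff) auto
      then show "rho a b t * ln (x/(x-t)) \<le> rho a b t * ln (x/(x-b))"
        using rho0[OF t] by (intro mult_left_mono) auto
    qed
    also have "\<dots> = m * ln (x/(x-b))" unfolding mi[symmetric] by (simp add: integral_mult_left)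
    finally show ?thesis .
  qed
  have g: "((\<lambda>x. m * ln (x/(x-b))) \<longlongrightarrow> 0) at_top"
  proof -
    have "((\<lambda>x. ln (x/(x-b))) \<longlongrightarrow> 0) at_top" using ab by real_asymp
    then show ?thesis by (rule tendsto_mult_right_zero)
  qed
  have ev: "eventually (\<lambda>x. x > b) at_top" by (rule eventually_gt_at_top)
  have "((\<lambda>x. integral {a..b} (\<lambda>t. rho a b t * ln (x/(x-t)))) \<longlongrightarrow> 0) at_top"
  proof (rule tendsto_sandwich[OF _ _ tendsto_const g])
    show "\<forall>\<^sub>F x in at_top. 0 \<le> integral {a..b} (\<lambda>t. rho a b t * ln (x/(x-t)))"
      using ev by eventually_elim (rule lo)
    show "\<forall>\<^sub>F x in at_top. integral {a..b} (\<lambda>t. rho a b t * ln (x/(x-t))) \<le> m * ln (x/(x-b))"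
      using ev by eventually_elim (rule hi)
  qed
  moreover have "eventually (\<lambda>x. integral {a..b} (\<lambda>t. rho a b t * ln (x/(x-t))) = Uf a b x + m * ln x) at_top"
    using ev by eventually_elim (rule eq[symmetric])
  ultimately show ?thesis unfolding m_def[symmetric] by (rule Lim_transform_eventually)
qed

definition Cc :: "real \<Rightarrow> real \<Rightarrow> real" where
  "Cc a b = (a + b) / 4 * (1 - ln ((b - a) / 4))
              - sqrt (a * b) / 2 * ln ((sqrt b + sqrt a) / (sqrt b - sqrt a))"

definition Vf :: "real \<Rightarrow> real \<Rightarrow> real \<Rightarrow> real" where
  "Vf a b x = - (x - sqrt (a * b) * ln x) / 2 + Cc a b + 1/2 * (Phi a b x - Phi a b b)"

lemma const_zero:
  assumes ab: "0 < a" "a < b"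
  shows "-(a+b)/4 - (a+b)/4 * ln 4 - sqrt(a*b)/2 * ln (a+b-2 * sqrt(a*b)) + Cc a b - Phi a b b/2 = 0"
proof -
  define sa where "sa = sqrt a"
  define sb where "sb = sqrt b"
  define c where "c = sqrt (a*b)"
  have s: "0 < sa" "sa < sb" using ab by (auto simp: sa_def sb_def)
  have a: "a = sa^2" "b = sb^2" using ab by (auto simp: sa_def sb_def)
  have c: "c = sa * sb" by (simp add: c_def sa_def sb_def real_sqrt_mult)
  define Lm where "Lm = ln (sb - sa)"
  define Lp where "Lp = ln (sb + sa)"
  have ba: "b - a = (sb - sa) * (sb + sa)" unfolding a by (simp add: power2_eq_square algebra_simps)
  have Lba: "ln (b - a) = Lm + Lp" unfolding ba Lm_def Lp_def using s by (simp add: ln_mult)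
  have L4: "ln ((b - a)/4) = Lm + Lp - ln 4" using ab Lba by (simp add: ln_div)
  have Lq: "ln ((sqrt b + sqrt a) / (sqrt b - sqrt a)) = Lp - Lm"
    unfolding sa_def[symmetric] sb_def[symmetric] Lm_def Lp_def using s by (simp add: ln_div)
  have c': "sqrt(a*b) = sa * sb" by (simp add: sa_def sb_def real_sqrt_mult)
  have q: "a + b - 2 * sqrt(a*b) = (sb - sa)^2" unfolding c' using a by (simp add: power2_eq_square algebra_simps)
  have Lq2: "ln (a + b - 2 * sqrt(a*b)) = 2 * Lm" unfolding q Lm_def using s by (simp add: ln_realpow)
  have Pb: "Phi a b b = -(a+b)/2 * (Lm + Lp) - c * (Lm + Lp)"
  proof -
    have "ln ((a+b)*b - 2*a*b - 2 * sqrt (a*b) * sqrt ((b-a)*(b-b))) - ln b = ln (b - a)"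
    proof -
      have "(a+b)*b - 2*a*b - 2 * sqrt (a*b) * sqrt ((b-a)*(b-b)) = b * (b - a)" by (simp add: algebra_simps)
      then show ?thesis using ab by (simp add: ln_mult)
    qed
    moreover have "2 * sqrt ((b-a)*(b-b)) + 2*b - a - b = b - a" by simp
    ultimately show ?thesis unfolding Phi_def Lba[symmetric] c_def by (simp add: algebra_simps)
  qed
  have Lq2c: "ln (a + b - 2 * c) = 2 * Lm" using Lq2 unfolding c_def .
  show ?thesis unfolding Cc_def L4 Lq Pb c_def[symmetric] Lq2c by (simp add: field_simps)
qed

lemma lim_V:
  assumes ab: "0 < a" "a < b"
  shows "((\<lambda>x. Vf a b x + (sqrt b - sqrt a)^2/4 * ln x) \<longlongrightarrow> 0) at_top"
proof -
  define c where "c = sqrt (a*b)"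
  have c: "c > 0" "c^2 = a*b" using ab by (auto simp: c_def)
  have m: "(sqrt b - sqrt a)^2/4 = (a+b)/4 - c/2" using ab by (simp add: sqab c_def field_simps)
  define E where "E = (\<lambda>x. (sqrt((x-a)*(x-b)) - x)/2 - (a+b)/4 * ln ((2 * sqrt ((x-a)*(x-b)) + 2*x - a - b)/x)
       - c/2 * ln (((a+b)*x - 2*a*b - 2 * c * sqrt ((x-a)*(x-b)))/x) + Cc a b - Phi a b b/2)"
  have eq: "Vf a b x + (sqrt b - sqrt a)^2/4 * ln x = E x" if x: "x > b" for x
  proof -
    have xp: "x > 0" using x ab by simp
    have p: "2 * sqrt ((x-a)*(x-b)) + 2*x - a - b > 0" "(a+b)*x - 2*a*b - 2 * c * sqrt ((x-a)*(x-b)) > 0"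
      using Phi_pos[OF ab, of x] x unfolding c_def by auto
    have l1: "ln (2 * sqrt ((x-a)*(x-b)) + 2*x - a - b) = ln ((2 * sqrt ((x-a)*(x-b)) + 2*x - a - b)/x) + ln x"
      using p xp by (simp add: ln_div)
    have l2: "ln ((a+b)*x - 2*a*b - 2 * c * sqrt ((x-a)*(x-b))) - ln x = ln (((a+b)*x - 2*a*b - 2 * c * sqrt ((x-a)*(x-b)))/x)"
      using p xp by (simp add: ln_div)
    have ph: "Phi a b x = sqrt ((x-a)*(x-b)) - (a+b)/2 * ln (2 * sqrt ((x-a)*(x-b)) + 2*x - a - b)
         - c * (ln ((a+b)*x - 2*a*b - 2 * c * sqrt ((x-a)*(x-b))) - ln x)"
      by (simp add: Phi_def c_def)
    show ?thesis unfolding Vf_def ph E_def m c_def[symmetric] l2 l1 by (simp add: field_simps)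
  qed
  have c4: "a + b - 2*c > 0"
  proof -
    have "a + b - 2*c = (sqrt b - sqrt a)^2" using ab by (simp add: sqab c_def)
    moreover have "sqrt a < sqrt b" using ab by simp
    ultimately show ?thesis by simp
  qed
  have t1: "((\<lambda>x. sqrt((x-a)*(x-b)) - x) \<longlongrightarrow> -(a+b)/2) at_top" by real_asymp
  have t2: "((\<lambda>x. (2 * sqrt((x-a)*(x-b)) + 2*x - a - b)/x) \<longlongrightarrow> 4) at_top" by real_asymp
  have t3: "((\<lambda>x. ((a+b)*x - 2*a*b - 2 * c * sqrt((x-a)*(x-b)))/x) \<longlongrightarrow> a+b-2*c) at_top"
    using c by real_asymp
  have T: "(E \<longlongrightarrow> (-(a+b)/2)/2 - (a+b)/4 * ln 4 - c/2 * ln (a+b-2*c) + Cc a b - Phi a b b/2) at_top"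
    unfolding E_def using c4 by (intro tendsto_intros t1 t2 t3) auto
  have X0: "(-(a+b)/2)/2 - (a+b)/4 * ln 4 - c/2 * ln (a+b-2*c) + Cc a b - Phi a b b/2 = 0"
  proof -
    have "(-(a+b)/2)/2 = -(a+b)/4" by simp
    then show ?thesis using const_zero[OF ab] unfolding c_def by linarith
  qed
  have "(E \<longlongrightarrow> 0) at_top" using T unfolding X0 .
  moreover have "eventually (\<lambda>x. E x = Vf a b x + (sqrt b - sqrt a)^2/4 * ln x) at_top"
    using eventually_gt_at_top[of b] by eventually_elim (rule eq[symmetric])
  ultimately show ?thesis by (rule Lim_transform_eventually)
qed

lemma Vf_deriv:
  assumes ab: "0 < a" "a < b" and y: "b < y"
  shows "(Vf a b has_real_derivative -(1 - sqrt(a*b)*(1/y))/2 + 1/2*(sqrt((y-a)*(y-b))/y - 0)) (at y)"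
proof -
  have yp: "y > 0" using ab y by simp
  have h: "((\<lambda>x. x - sqrt(a*b)*ln x) has_real_derivative 1 - sqrt(a*b)*(1/y)) (at y)"
    by (intro DERIV_diff DERIV_cmult DERIV_ident DERIV_ln_divide yp)
  have h2: "((\<lambda>x. - (x - sqrt(a*b)*ln x)/2 + Cc a b) has_real_derivative -(1 - sqrt(a*b)*(1/y))/2 + 0) (at y)"
    by (intro DERIV_add DERIV_cdivide DERIV_minus h DERIV_const)
  have h3: "((\<lambda>x. 1/2 * (Phi a b x - Phi a b b)) has_real_derivative 1/2*(sqrt((y-a)*(y-b))/y - 0)) (at y)"
    by (intro DERIV_cmult DERIV_diff Phi_deriv ab y DERIV_const)
  have "((\<lambda>x. - (x - sqrt(a*b)*ln x)/2 + Cc a b + 1/2 * (Phi a b x - Phi a b b)) has_real_derivative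
      -(1 - sqrt(a*b)*(1/y))/2 + 0 + 1/2*(sqrt((y-a)*(y-b))/y - 0)) (at y)"
    by (rule DERIV_add[OF h2 h3])
  then show ?thesis unfolding Vf_def[abs_def] by simp
qed

lemma UV_eq:
  assumes ab: "0 < a" "a < b" and x: "b \<le> x"
  shows "Uf a b x = Vf a b x"
proof -
  define W where "W = (\<lambda>x. Uf a b x - Vf a b x)"
  have Wd: "(W has_real_derivative 0) (at y)" if y: "b < y" for y
  proof -
    have yp: "y > 0" using ab y by simp
    have "(W has_real_derivative -((y - sqrt(a*b) - sqrt((y-a)*(y-b)))/(2*y))
        - (-(1 - sqrt(a*b)*(1/y))/2 + 1/2*(sqrt((y-a)*(y-b))/y - 0))) (at y)"
      unfolding W_def by (intro DERIV_diff U_deriv Vf_deriv ab y)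
    moreover have "-((y - sqrt(a*b) - sqrt((y-a)*(y-b)))/(2*y))
        - (-(1 - sqrt(a*b)*(1/y))/2 + 1/2*(sqrt((y-a)*(y-b))/y - 0)) = 0"
      using yp by (simp add: field_simps)
    ultimately show ?thesis by simp
  qed
  have Vc: "continuous_on {b..} (Vf a b)"
  proof -
    have "continuous_on {b..} (\<lambda>x. - (x - sqrt(a*b)*ln x)/2 + Cc a b + 1/2 * (Phi a b x - Phi a b b))"
      using ab by (intro continuous_intros Phi_cont) auto
    then show ?thesis unfolding Vf_def[abs_def] .
  qed
  have Wc: "continuous_on {b..z} W" if z: "b < z" for z
    unfolding continuous_on_eq_continuous_within
  proof
    fix p assume p: "p \<in> {b..z}"
    show "continuous (at p within {b..z}) W"
    proof (cases "p = b")
      case False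
      then have "b < p" using p by simp
      then have "isCont W p" using Wd DERIV_isCont by blast
      then show ?thesis by (rule continuous_at_imp_continuous_at_within)
    next
      case True
      have u: "continuous (at b within {b..z}) (Uf a b)"
        unfolding continuous_within using U_cont_b[OF ab] by (rule tendsto_within_subset) auto
      have v: "continuous (at b within {b..z}) (Vf a b)"
        using Vc continuous_on_eq_continuous_within[of "{b..}" "Vf a b"]
        by (meson atLeastAtMost_iff atLeast_iff continuous_within_subset order_refl subsetI)
      show ?thesis unfolding True W_def using u v by (intro continuous_diff)
    qed
  qed
  have Wconst: "W z = W b" if z: "b < z" for z
    using DERIV_isconst_end[OF z Wc[OF z]] Wd by simp
  have Wlim: "(W \<longlongrightarrow> 0) at_top"
  proof -
    have "((\<lambda>x. (Uf a b x + (sqrt b - sqrt a)^2/4 * ln x) - (Vf a b x + (sqrt b - sqrt a)^2/4 * ln x))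
       \<longlongrightarrow> 0 - 0) at_top"
      by (intro tendsto_diff lim_U lim_V ab)
    moreover have "(\<lambda>x. (Uf a b x + (sqrt b - sqrt a)^2/4 * ln x) - (Vf a b x + (sqrt b - sqrt a)^2/4 * ln x)) = W"
      by (auto simp: W_def fun_eq_iff)
    ultimately show ?thesis by simp
  qed
  have ev: "\<forall>\<^sub>F z in at_top. W z = W b"
    using eventually_gt_at_top[of b] by eventually_elim (rule Wconst)
  have "((\<lambda>z::real. W b) \<longlongrightarrow> 0) at_top" using Lim_transform_eventually[OF Wlim ev] .
  then have "W b = 0" using tendsto_unique[OF trivial_limit_at_top_linorder tendsto_const] by blast
  moreover have "W x = W b" using x Wconst by (cases "x = b") auto
  ultimately show ?thesis by (simp add: W_def)
qed

theorem lemma4p4: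
  fixes a b :: real
  assumes "0 < a" and "a < b"
  defines "\<mu> \<equiv> mp_measure a b"
  defines "C \<equiv> (a + b) / 4 * (1 - ln ((b - a) / 4))
              - sqrt (a * b) / 2 * ln ((sqrt b + sqrt a) / (sqrt b - sqrt a))"
  shows "1 / (2 * pi) * (LBINT t=a..b. sqrt ((t - a) * (b - t)) / t) = (sqrt b - sqrt a)^2 / 4
       \<and> ((\<lambda>x. log_potential \<mu> x + (sqrt b - sqrt a)^2 / 4 * ln x) \<longlongrightarrow> 0) at_top
       \<and> (\<forall>x\<ge>b. log_potential \<mu> x =
           - (x - sqrt (a * b) * ln x) / 2 + C
           + 1 / 2 * (LBINT t=b..x. sqrt ((t - a) * (t - b)) / t))"
proof (intro conjI allI impI)
  have ab: "0 < a" "a < b" by fact+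
  have pot: "log_potential \<mu> x = Uf a b x" if "b \<le> x" for x
    unfolding \<mu>_def Uf_def using pot_eq[OF ab that] .
  show "1 / (2 * pi) * (LBINT t=a..b. sqrt ((t - a) * (b - t)) / t) = (sqrt b - sqrt a)^2 / 4"
  proof -
    have cont: "continuous_on {a..b} (\<lambda>t. sqrt((t-a)*(b-t))/t)" using ab by (intro continuous_intros) auto
    have "(LBINT t=a..b. sqrt((t-a)*(b-t))/t) = pi*((a+b)/2 - sqrt(a*b))"
      using LBINT_eq_integral[OF _ cont] integral_unique[OF int_F[OF ab]] ab by simp
    moreover have "1/(2*pi) * (pi*((a+b)/2 - sqrt(a*b))) = (sqrt b - sqrt a)^2/4"
    proof -
      have "1/(2*pi) * (pi*((a+b)/2 - sqrt(a*b))) = (a + b - 2 * sqrt(a*b))/4" by (simp add: field_simps)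
      then show ?thesis using ab by (simp add: sqab)
    qed
    ultimately show ?thesis by simp
  qed
  show "((\<lambda>x. log_potential \<mu> x + (sqrt b - sqrt a)^2 / 4 * ln x) \<longlongrightarrow> 0) at_top"
  proof (rule Lim_transform_eventually[OF lim_U[OF ab]])
    show "\<forall>\<^sub>F x in at_top. Uf a b x + (sqrt b - sqrt a)^2/4 * ln x = log_potential \<mu> x + (sqrt b - sqrt a)^2 / 4 * ln x"
      using eventually_ge_at_top[of b] by eventually_elim (simp add: pot)
  qed
  fix x :: real assume x: "b \<le> x"
  have "log_potential \<mu> x = Vf a b x" using pot[OF x] UV_eq[OF ab x] by simp
  also have "\<dots> = - (x - sqrt (a * b) * ln x) / 2 + C + 1 / 2 * (LBINT t=b..x. sqrt ((t - a) * (t - b)) / t)"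
    unfolding Vf_def LBINT_Phi[OF ab x] C_def Cc_def ..
  finally show "log_potential \<mu> x = - (x - sqrt (a * b) * ln x) / 2 + C + 1 / 2 * (LBINT t=b..x. sqrt ((t - a) * (t - b)) / t)" .
qed

end
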